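(* Let $(G,a,b)$ be a linear interval strip. Then every vertex $v\in N_G(a)$ satisfies $\deg_{G^2}(v)\le 3\omega(G)-3$.
   Context: A linear interval graph is obtained by taking a line $\Sigma$, intervals $F_1,\dots,F_k\subseteq\Sigma$ each homeomorphic to $[0,1]$, a finite set of points of $\Sigma$ as vertex set, and joining two points iff both lie in some $F_i$. A linear interval strip is a triple $(G,v_1,v_n)$ where $G$ is a linear interval graph admitting such a representation in which the vertices in order along the line are $v_1,\dots,v_n$ (so the ends are the leftmost and rightmost vertices). $G^2$ is the graph on $V(G)$ with distinct vertices adjacent iff at distance at most $2$ in $G$. $\omega$ is the clique number. *)

theory Defs
  imports Main "HOL-Library.Library"
begin

definition lin_interval_rep :: "'a set \<Rightarrow> ('a \<Rightarrow> 'a \<Rightarrow> bool) \<Rightarrow> ('a \<Rightarrow> real) \<Rightarrow> (real \<times> real) list \<Rightarrow> bool" where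
  "lin_interval_rep V E p Is \<longleftrightarrow>
     finite V \<and> inj_on p V \<and> (\<forall>I\<in>set Is. fst I < snd I) \<and>
     (\<forall>u v. E u v \<longleftrightarrow> (u \<in> V \<and> v \<in> V \<and> u \<noteq> v \<and>
        (\<exists>I\<in>set Is. fst I \<le> p u \<and> p u \<le> snd I \<and> fst I \<le> p v \<and> p v \<le> snd I)))"

definition linear_interval_graph :: "'a set \<Rightarrow> ('a \<Rightarrow> 'a \<Rightarrow> bool) \<Rightarrow> bool" where
  "linear_interval_graph V E \<longleftrightarrow> (\<exists>p Is. lin_interval_rep V E p Is)"

definition linear_interval_strip :: "'a set \<Rightarrow> ('a \<Rightarrow> 'a \<Rightarrow> bool) \<Rightarrow> 'a \<Rightarrow> 'a \<Rightarrow> bool" where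
  "linear_interval_strip V E a b \<longleftrightarrow> a \<in> V \<and> b \<in> V \<and>
     (\<exists>p Is. lin_interval_rep V E p Is \<and> (\<forall>v\<in>V. p a \<le> p v \<and> p v \<le> p b))"

definition neighbours :: "'a set \<Rightarrow> ('a \<Rightarrow> 'a \<Rightarrow> bool) \<Rightarrow> 'a \<Rightarrow> 'a set" where
  "neighbours V E v = {u \<in> V. E v u}"

definition sq_adj :: "'a set \<Rightarrow> ('a \<Rightarrow> 'a \<Rightarrow> bool) \<Rightarrow> 'a \<Rightarrow> 'a \<Rightarrow> bool" where
  "sq_adj V E u v \<longleftrightarrow> u \<in> V \<and> v \<in> V \<and> u \<noteq> v \<and> (E u v \<or> (\<exists>w\<in>V. E u w \<and> E w v))"

definition sq_degree :: "'a set \<Rightarrow> ('a \<Rightarrow> 'a \<Rightarrow> bool) \<Rightarrow> 'a \<Rightarrow> nat" where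
  "sq_degree V E v = card {u \<in> V. sq_adj V E v u}"

definition is_clique :: "'a set \<Rightarrow> ('a \<Rightarrow> 'a \<Rightarrow> bool) \<Rightarrow> 'a set \<Rightarrow> bool" where
  "is_clique V E K \<longleftrightarrow> K \<subseteq> V \<and> (\<forall>x\<in>K. \<forall>y\<in>K. x \<noteq> y \<longrightarrow> E x y)"

definition clique_number :: "'a set \<Rightarrow> ('a \<Rightarrow> 'a \<Rightarrow> bool) \<Rightarrow> nat" where
  "clique_number V E = Max {card K | K. is_clique V E K}"

end

theory Submission
  imports Defs
begin

lemma interval_clique:
  assumes "lin_interval_rep V E p Is" "I \<in> set Is" "K \<subseteq> V"
    "\<forall>u\<in>K. fst I \<le> p u \<and> p u \<le> snd I"
  shows "is_clique V E K"
  using assms unfolding is_clique_def lin_interval_rep_def by blast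

lemma clique_le:
  assumes "finite V" "is_clique V E K"
  shows "card K \<le> clique_number V E"
proof -
  have "{card K |K. is_clique V E K} \<subseteq> card ` Pow V"
    unfolding is_clique_def by auto
  then have "finite {card K |K. is_clique V E K}"
    using assms(1) finite_subset by blast
  then show ?thesis unfolding clique_number_def
    using assms(2) by (intro Max_ge) auto
qed

lemma card_un_le:
  assumes "finite X" "finite Y" "X \<inter> Y \<noteq> {}"
  shows "card (X \<union> Y) + 1 \<le> card X + card Y"
proof -
  have "card (X \<inter> Y) \<ge> 1" using assms
    by (metis One_nat_def Suc_leI card_gt_0_iff finite_Int)
  then show ?thesis using card_Un_Int[OF assms(1,2)] by linarith
qed

lemma max_exists:
  fixes f :: "'a \<Rightarrow> real"
  assumes "finite S" "S \<noteq> {}"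
  shows "\<exists>x\<in>S. \<forall>y\<in>S. f y \<le> f x"
proof -
  have "Max (f ` S) \<in> f ` S" using assms by simp
  then obtain x where "x \<in> S" "f x = Max (f ` S)" by force
  then show ?thesis using assms by (metis Max_ge finite_imageI image_eqI)
qed

theorem mainTheorem10:
  fixes V :: "'a set" and E :: "'a \<Rightarrow> 'a \<Rightarrow> bool" and a b :: 'a
  assumes "linear_interval_strip V E a b"
    and "v \<in> neighbours V E a"
  shows "int (sq_degree V E v) \<le> 3 * int (clique_number V E) - 3"
proof -
  obtain p Is where rep: "lin_interval_rep V E p Is" and left: "\<forall>u\<in>V. p a \<le> p u"
    and aV: "a \<in> V"
    using assms(1) unfolding linear_interval_strip_def by blast
  have finV: "finite V" and injp: "inj_on p V" using rep unfolding lin_interval_rep_def by auto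
  have Eiff: "\<And>u w. E u w \<longleftrightarrow> (u \<in> V \<and> w \<in> V \<and> u \<noteq> w \<and>
        (\<exists>I\<in>set Is. fst I \<le> p u \<and> p u \<le> snd I \<and> fst I \<le> p w \<and> p w \<le> snd I))"
    using rep unfolding lin_interval_rep_def by blast
  have Eav: "E a v" and vV: "v \<in> V" using assms(2) unfolding neighbours_def by auto
  define B2 where "B2 = {u\<in>V. u = v \<or> E v u \<or> (\<exists>w\<in>V. E v w \<and> E w u)}"
  define B1 where "B1 = {u\<in>V. u = v \<or> E v u}"
  have fB2: "finite B2" "B2 \<noteq> {}" using finV vV unfolding B2_def by auto
  have fB1: "finite B1" "B1 \<noteq> {}" using finV vV unfolding B1_def by auto
  obtain x1 where x1: "x1 \<in> B1" "\<forall>y\<in>B1. p y \<le> p x1" using max_exists[OF fB1] by blast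
  obtain x2 where x2: "x2 \<in> B2" "\<forall>y\<in>B2. p y \<le> p x2" using max_exists[OF fB2] by blast
  have x1V: "x1 \<in> V" using x1 unfolding B1_def by auto
  have pvx1: "p v \<le> p x1" using x1 vV unfolding B1_def by auto
  have x1B2: "x1 \<in> B2" using x1 unfolding B1_def B2_def by auto
  have px1x2: "p x1 \<le> p x2" using x2 x1B2 by auto
  define A0 where "A0 = {u\<in>V. p u \<le> p v}"
  define A1 where "A1 = {u\<in>V. p v \<le> p u \<and> p u \<le> p x1}"
  define A2 where "A2 = {u\<in>V. p x1 \<le> p u \<and> p u \<le> p x2}"
  have c0: "is_clique V E A0"
  proof -
    obtain I where I: "I \<in> set Is" "fst I \<le> p a" "p a \<le> snd I" "fst I \<le> p v" "p v \<le> snd I"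
      using Eav Eiff by blast
    show ?thesis
      by (rule interval_clique[OF rep I(1)]) (use I left in \<open>auto simp: A0_def\<close>)
  qed
  have c1: "is_clique V E A1"
  proof (cases "x1 = v")
    case True
    have "A1 \<subseteq> {v}"
    proof
      fix u assume "u \<in> A1"
      then have "u \<in> V" "p u = p v" using True unfolding A1_def by auto
      then show "u \<in> {v}" using injp vV by (auto dest: inj_onD)
    qed
    then show ?thesis unfolding is_clique_def A1_def by auto
  next
    case False
    then have "E v x1" using x1 unfolding B1_def by auto
    then obtain I where I: "I \<in> set Is" "fst I \<le> p v" "p v \<le> snd I" "fst I \<le> p x1" "p x1 \<le> snd I"
      using Eiff by blast
    show ?thesis
      by (rule interval_clique[OF rep I(1)]) (use I in \<open>auto simp: A1_def\<close>)
  qed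
  have c2: "is_clique V E A2"
  proof (cases "x2 \<in> B1")
    case True
    then have "p x2 \<le> p x1" using x1 by auto
    have "A2 \<subseteq> {x1}"
    proof
      fix u assume "u \<in> A2"
      then have "u \<in> V" "p u = p x1" using \<open>p x2 \<le> p x1\<close> unfolding A2_def by auto
      then show "u \<in> {x1}" using injp x1V by (auto dest: inj_onD)
    qed
    then show ?thesis unfolding is_clique_def A2_def by auto
  next
    case False
    then obtain w where w: "w \<in> V" "E v w" "E w x2" using x2 unfolding B2_def B1_def by auto
    have "w \<in> B1" using w unfolding B1_def by auto
    then have pw: "p w \<le> p x1" using x1 by auto
    obtain I where I: "I \<in> set Is" "fst I \<le> p w" "p w \<le> snd I" "fst I \<le> p x2" "p x2 \<le> snd I"
      using w(3) Eiff by blast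
    show ?thesis
      by (rule interval_clique[OF rep I(1)]) (use I pw in \<open>auto simp: A2_def\<close>)
  qed
  have cover: "B2 \<subseteq> A0 \<union> A1 \<union> A2"
  proof
    fix u assume u: "u \<in> B2"
    then have "u \<in> V" "p u \<le> p x2" using x2 unfolding B2_def by auto
    then show "u \<in> A0 \<union> A1 \<union> A2" unfolding A0_def A1_def A2_def by auto
  qed
  have S: "{u \<in> V. sq_adj V E v u} \<subseteq> (A0 \<union> A1 \<union> A2) - {v}"
    using cover unfolding sq_adj_def B2_def by auto
  have fA: "finite A0" "finite A1" "finite A2" using finV unfolding A0_def A1_def A2_def by auto
  have vA0: "v \<in> A0" using vV unfolding A0_def by auto
  have vA1: "v \<in> A1" using vV pvx1 unfolding A1_def by auto
  have x1A1: "x1 \<in> A1" "x1 \<in> A2" using x1V pvx1 px1x2 unfolding A1_def A2_def by auto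
  have k0: "card A0 \<le> clique_number V E" by (rule clique_le[OF finV c0])
  have k1: "card A1 \<le> clique_number V E" by (rule clique_le[OF finV c1])
  have k2: "card A2 \<le> clique_number V E" by (rule clique_le[OF finV c2])
  have u12: "card (A1 \<union> A2) + 1 \<le> card A1 + card A2"
    using card_un_le[of A1 A2] fA x1A1 by blast
  have u012: "card (A0 \<union> (A1 \<union> A2)) + 1 \<le> card A0 + card (A1 \<union> A2)"
    using card_un_le[of A0 "A1 \<union> A2"] fA vA0 vA1 by blast
  have "sq_degree V E v \<le> card ((A0 \<union> A1 \<union> A2) - {v})"
    unfolding sq_degree_def using S fA by (intro card_mono) auto
  also have "\<dots> = card (A0 \<union> A1 \<union> A2) - 1" using fA vA0 by simp
  finally have "sq_degree V E v + 1 \<le> card (A0 \<union> (A1 \<union> A2))"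
    using vA0 fA by (simp add: Un_assoc) (metis Suc_pred card_gt_0_iff finite_UnI UnI1 empty_iff le_SucI Suc_le_mono add.commute plus_1_eq_Suc)
  then show ?thesis using u12 u012 k0 k1 k2 by linarith
qed

end
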